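(* Let $X$ be a $C^*$-correspondence over $A$ with left action $\phi$, let $Y=X\oplus T$ over $B=A\oplus T$ be formed by adding the tail $T=(\ker\phi)^{(\mathbb N)}$, and let $(\tilde\pi,\tilde t)$ be a representation of $Y$. Then there is a projection $p$ in the multiplier algebra $\mathcal M(C^*(\tilde\pi,\tilde t))$ such that for all $a\in A$, $\xi\in X$ and $\vec f=(f_1,f_2,\dots)\in T$: (1) $p\,\tilde t(\xi,\vec f)=\tilde t(\xi,(f_1,0,0,\dots))$; (2) $\tilde t(\xi,\vec f)\,p=\tilde t(\xi,\vec 0)$; (3) $p\,\tilde\pi(a,\vec f)=\tilde\pi(a,\vec f)\,p=\tilde\pi(a,\vec 0)$.
   Context: A $C^*$-correspondence over $A$ is a right Hilbert $A$-module $X$ with inner product $\langle\cdot,\cdot\rangle_A$ and a $*$-homomorphism $\phi:A\to\mathcal L(X)$. A representation of $Y$ over $B$ in a $C^*$-algebra $C$ is a pair $(\tilde\pi,\tilde t)$, $\tilde\pi:B\to C$ a $*$-homomorphism, $\tilde t:Y\to C$ linear, with $\tilde t(y)^*\tilde t(y')=\tilde\pi(\langle y,y'\rangle_B)$, $\tilde t(\phi_B(b)y)=\tilde\pi(b)\tilde t(y)$, $\tilde t(yb)=\tilde t(y)\tilde\pi(b)$; $C^*(\tilde\pi,\tilde t)$ is the $C^*$-subalgebra of $C$ generated by $\tilde\pi(B)\cup\tilde t(Y)$. Adding the tail: $T:=(\ker\phi)^{(\mathbb N)}$ is the $c_0$-direct sum of copies of $\ker\phi$ (coordinatewise operations), a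 Hilbert module over itself with $\langle\vec f,\vec g\rangle=\vec f^*\vec g$; $B:=A\oplus T$, $Y:=X\oplus T$ with $(\xi,\vec f)(a,\vec g)=(\xi a,\vec f\vec g)$, $\langle(\xi,\vec f),(\nu,\vec g)\rangle_B=(\langle\xi,\nu\rangle_A,\vec f^*\vec g)$, $\phi_B(a,\vec f)(\xi,\vec g)=(\phi(a)\xi,(ag_1,f_1g_2,f_2g_3,\dots))$. *)

theory Defs
  imports Complex_Main
begin

class complex_scale =
  fixes scaleC :: "complex \<Rightarrow> 'a \<Rightarrow> 'a"  (infixr \<open>*\<^sub>C\<close> 75)

class cvec = real_normed_vector + complex_scale +
  assumes scaleC_add_right: "c *\<^sub>C (x + y) = c *\<^sub>C x + c *\<^sub>C y"
    and scaleC_add_left: "(c + d) *\<^sub>C x = c *\<^sub>C x + d *\<^sub>C x"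
    and scaleC_scaleC: "c *\<^sub>C (d *\<^sub>C x) = (c * d) *\<^sub>C x"
    and scaleC_one: "1 *\<^sub>C x = x"
    and scaleR_scaleC: "scaleR r x = (complex_of_real r) *\<^sub>C x"
    and norm_scaleC: "norm (c *\<^sub>C x) = cmod c * norm x"

class cbanach = cvec + complete_space

class cstar_alg = cbanach + real_normed_algebra +
  fixes cstar :: "'a \<Rightarrow> 'a"
  assumes scaleC_mult_left: "(c *\<^sub>C x) * y = c *\<^sub>C (x * y)"
    and scaleC_mult_right: "x * (c *\<^sub>C y) = c *\<^sub>C (x * y)"
    and cstar_add: "cstar (x + y) = cstar x + cstar y"
    and cstar_scaleC: "cstar (c *\<^sub>C x) = cnj c *\<^sub>C cstar x"
    and cstar_mult: "cstar (x * y) = cstar y * cstar x"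
    and cstar_cstar: "cstar (cstar x) = x"
    and cstar_identity: "norm (cstar x * x) = norm x * norm x"

definition positive :: "'a::cstar_alg \<Rightarrow> bool" where
  "positive a \<longleftrightarrow> (\<exists>b. a = cstar b * b)"

definition hilbert_module ::
  "('x::cbanach \<Rightarrow> 'x \<Rightarrow> 'a::cstar_alg) \<Rightarrow> ('x \<Rightarrow> 'a \<Rightarrow> 'x) \<Rightarrow> bool" where
  "hilbert_module ip rmul \<longleftrightarrow>
     (\<forall>x y a. rmul (x + y) a = rmul x a + rmul y a) \<and>
     (\<forall>x a b. rmul x (a + b) = rmul x a + rmul x b) \<and>
     (\<forall>x a b. rmul (rmul x a) b = rmul x (a * b)) \<and>
     (\<forall>x a c. rmul (c *\<^sub>C x) a = c *\<^sub>C rmul x a \<and> rmul x (c *\<^sub>C a) = c *\<^sub>C rmul x a) \<and>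
     (\<forall>x y z. ip x (y + z) = ip x y + ip x z) \<and>
     (\<forall>x y c. ip x (c *\<^sub>C y) = c *\<^sub>C ip x y) \<and>
     (\<forall>x y a. ip x (rmul y a) = ip x y * a) \<and>
     (\<forall>x y. ip y x = cstar (ip x y)) \<and>
     (\<forall>x. positive (ip x x)) \<and>
     (\<forall>x. ip x x = 0 \<longrightarrow> x = 0) \<and>
     (\<forall>x. norm x = sqrt (norm (ip x x)))"

definition adjointable :: "('x \<Rightarrow> 'x \<Rightarrow> 'a) \<Rightarrow> ('x \<Rightarrow> 'x) \<Rightarrow> bool" where
  "adjointable ip S \<longleftrightarrow> (\<exists>S'. \<forall>x y. ip (S x) y = ip x (S' y))"

definition cstar_correspondence ::
  "('x::cbanach \<Rightarrow> 'x \<Rightarrow> 'a::cstar_alg) \<Rightarrow> ('x \<Rightarrow> 'a \<Rightarrow> 'x) \<Rightarrow> ('a \<Rightarrow> 'x \<Rightarrow> 'x) \<Rightarrow> bool" where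
  "cstar_correspondence ip rmul phi \<longleftrightarrow>
     hilbert_module ip rmul \<and>
     (\<forall>a. adjointable ip (phi a)) \<and>
     (\<forall>a b x. phi (a + b) x = phi a x + phi b x) \<and>
     (\<forall>a c x. phi (c *\<^sub>C a) x = c *\<^sub>C phi a x) \<and>
     (\<forall>a b x. phi (a * b) x = phi a (phi b x)) \<and>
     (\<forall>a x y. ip (phi (cstar a) x) y = ip x (phi a y))"

definition ker_phi :: "('a \<Rightarrow> 'x::zero \<Rightarrow> 'x) \<Rightarrow> 'a set" where
  "ker_phi phi = {a. \<forall>x. phi a x = 0}"

text \<open>T = c_0-direct sum of copies of ker phi; sequences are indexed from 0,
  so f 0 is the first coordinate f_1.\<close>
definition tail :: "('a::cstar_alg \<Rightarrow> 'x::zero \<Rightarrow> 'x) \<Rightarrow> (nat \<Rightarrow> 'a) set" where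
  "tail phi = {f. (\<forall>n. f n \<in> ker_phi phi) \<and> (\<lambda>n. norm (f n)) \<longlonglongrightarrow> 0}"

definition B_add :: "'a::cstar_alg \<times> (nat \<Rightarrow> 'a) \<Rightarrow> 'a \<times> (nat \<Rightarrow> 'a) \<Rightarrow> 'a \<times> (nat \<Rightarrow> 'a)" where
  "B_add b b' = (fst b + fst b', \<lambda>n. snd b n + snd b' n)"
definition B_scale :: "complex \<Rightarrow> 'a::cstar_alg \<times> (nat \<Rightarrow> 'a) \<Rightarrow> 'a \<times> (nat \<Rightarrow> 'a)" where
  "B_scale c b = (c *\<^sub>C fst b, \<lambda>n. c *\<^sub>C snd b n)"
definition B_mult :: "'a::cstar_alg \<times> (nat \<Rightarrow> 'a) \<Rightarrow> 'a \<times> (nat \<Rightarrow> 'a) \<Rightarrow> 'a \<times> (nat \<Rightarrow> 'a)" where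
  "B_mult b b' = (fst b * fst b', \<lambda>n. snd b n * snd b' n)"
definition B_star :: "'a::cstar_alg \<times> (nat \<Rightarrow> 'a) \<Rightarrow> 'a \<times> (nat \<Rightarrow> 'a)" where
  "B_star b = (cstar (fst b), \<lambda>n. cstar (snd b n))"

definition Y_add :: "'x::cbanach \<times> (nat \<Rightarrow> 'a::cstar_alg) \<Rightarrow> 'x \<times> (nat \<Rightarrow> 'a) \<Rightarrow> 'x \<times> (nat \<Rightarrow> 'a)" where
  "Y_add y y' = (fst y + fst y', \<lambda>n. snd y n + snd y' n)"
definition Y_scale :: "complex \<Rightarrow> 'x::cbanach \<times> (nat \<Rightarrow> 'a::cstar_alg) \<Rightarrow> 'x \<times> (nat \<Rightarrow> 'a)" where
  "Y_scale c y = (c *\<^sub>C fst y, \<lambda>n. c *\<^sub>C snd y n)"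
definition Y_rmul :: "('x \<Rightarrow> 'a \<Rightarrow> 'x) \<Rightarrow> 'x \<times> (nat \<Rightarrow> 'a::cstar_alg) \<Rightarrow> 'a \<times> (nat \<Rightarrow> 'a) \<Rightarrow> 'x \<times> (nat \<Rightarrow> 'a)" where
  "Y_rmul rmul y b = (rmul (fst y) (fst b), \<lambda>n. snd y n * snd b n)"
definition Y_ip :: "('x \<Rightarrow> 'x \<Rightarrow> 'a) \<Rightarrow> 'x \<times> (nat \<Rightarrow> 'a::cstar_alg) \<Rightarrow> 'x \<times> (nat \<Rightarrow> 'a) \<Rightarrow> 'a \<times> (nat \<Rightarrow> 'a)" where
  "Y_ip ip y y' = (ip (fst y) (fst y'), \<lambda>n. cstar (snd y n) * snd y' n)"
definition Y_lmul :: "('a \<Rightarrow> 'x \<Rightarrow> 'x) \<Rightarrow> 'a::cstar_alg \<times> (nat \<Rightarrow> 'a) \<Rightarrow> 'x \<times> (nat \<Rightarrow> 'a) \<Rightarrow> 'x \<times> (nat \<Rightarrow> 'a)" where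
  "Y_lmul phi b y = (phi (fst b) (fst y),
      \<lambda>n. if n = 0 then fst b * snd y 0 else snd b (n - 1) * snd y n)"

definition is_rep ::
  "('x::cbanach \<Rightarrow> 'x \<Rightarrow> 'a::cstar_alg) \<Rightarrow> ('x \<Rightarrow> 'a \<Rightarrow> 'x) \<Rightarrow> ('a \<Rightarrow> 'x \<Rightarrow> 'x)
   \<Rightarrow> ('a \<times> (nat \<Rightarrow> 'a) \<Rightarrow> 'c::cstar_alg) \<Rightarrow> ('x \<times> (nat \<Rightarrow> 'a) \<Rightarrow> 'c) \<Rightarrow> bool" where
  "is_rep ip rmul phi rpi t \<longleftrightarrow>
     (\<forall>a f a' f'. f \<in> tail phi \<longrightarrow> f' \<in> tail phi \<longrightarrow>
        rpi (B_add (a, f) (a', f')) = rpi (a, f) + rpi (a', f') \<and>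
        rpi (B_mult (a, f) (a', f')) = rpi (a, f) * rpi (a', f')) \<and>
     (\<forall>a f c. f \<in> tail phi \<longrightarrow>
        rpi (B_scale c (a, f)) = c *\<^sub>C rpi (a, f) \<and>
        rpi (B_star (a, f)) = cstar (rpi (a, f))) \<and>
     (\<forall>\<xi> f \<nu> g. f \<in> tail phi \<longrightarrow> g \<in> tail phi \<longrightarrow>
        t (Y_add (\<xi>, f) (\<nu>, g)) = t (\<xi>, f) + t (\<nu>, g) \<and>
        cstar (t (\<xi>, f)) * t (\<nu>, g) = rpi (Y_ip ip (\<xi>, f) (\<nu>, g))) \<and>
     (\<forall>\<xi> f c. f \<in> tail phi \<longrightarrow> t (Y_scale c (\<xi>, f)) = c *\<^sub>C t (\<xi>, f)) \<and>
     (\<forall>a f \<xi> g. f \<in> tail phi \<longrightarrow> g \<in> tail phi \<longrightarrow>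
        t (Y_lmul phi (a, f) (\<xi>, g)) = rpi (a, f) * t (\<xi>, g) \<and>
        t (Y_rmul rmul (\<xi>, g) (a, f)) = t (\<xi>, g) * rpi (a, f))"

definition cstar_subalg :: "'c::cstar_alg set \<Rightarrow> bool" where
  "cstar_subalg S \<longleftrightarrow> closed S \<and> 0 \<in> S \<and>
     (\<forall>x\<in>S. \<forall>y\<in>S. x + y \<in> S \<and> x * y \<in> S) \<and>
     (\<forall>x\<in>S. \<forall>c. c *\<^sub>C x \<in> S) \<and> (\<forall>x\<in>S. cstar x \<in> S)"

definition cstar_gen :: "'c::cstar_alg set \<Rightarrow> 'c set" where
  "cstar_gen G = \<Inter>{S. cstar_subalg S \<and> G \<subseteq> S}"

definition Cstar_rep :: "('a::cstar_alg \<Rightarrow> 'x::zero \<Rightarrow> 'x)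
   \<Rightarrow> ('a \<times> (nat \<Rightarrow> 'a) \<Rightarrow> 'c::cstar_alg) \<Rightarrow> ('x \<times> (nat \<Rightarrow> 'a) \<Rightarrow> 'c) \<Rightarrow> 'c set" where
  "Cstar_rep phi rpi t = cstar_gen (rpi ` (UNIV \<times> tail phi) \<union> t ` (UNIV \<times> tail phi))"

text \<open>Multiplier algebra M(D) as double centralizers (L,R) on D: x L(y) = R(x) y.
  The element d*p is R d, p*d is L d.\<close>
definition double_centralizer :: "'c::cstar_alg set \<Rightarrow> ('c \<Rightarrow> 'c) \<Rightarrow> ('c \<Rightarrow> 'c) \<Rightarrow> bool" where
  "double_centralizer D L R \<longleftrightarrow> L ` D \<subseteq> D \<and> R ` D \<subseteq> D \<and>
     (\<forall>x\<in>D. \<forall>y\<in>D. x * L y = R x * y)"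

text \<open>Projection in M(D): p = p* (adjoint (L,R)* = (x. (R x* )*, x. (L x* )*))
  and p p = p (product (L,R)(L',R') = (L o L', R' o R)).\<close>
definition multiplier_projection :: "'c::cstar_alg set \<Rightarrow> ('c \<Rightarrow> 'c) \<Rightarrow> ('c \<Rightarrow> 'c) \<Rightarrow> bool" where
  "multiplier_projection D L R \<longleftrightarrow> double_centralizer D L R \<and>
     (\<forall>x\<in>D. L x = cstar (R (cstar x)) \<and> R x = cstar (L (cstar x))) \<and>
     (\<forall>x\<in>D. L (L x) = L x \<and> R (R x) = R x)"

end

theory Submission
  imports Defs "HOL-Analysis.Analysis"
begin

lemma cstar_zero[simp]: "cstar (0::'a::cstar_alg) = 0"
  using cstar_add[of "0::'a" 0] by simp

lemma cstar_minus: "cstar (- x) = - cstar (x::'a::cstar_alg)"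
  using cstar_add[of x "-x"] by (simp add: add_eq_0_iff)

lemma cstar_diff: "cstar (x - y) = cstar x - cstar (y::'a::cstar_alg)"
  using cstar_add[of x "-y"] cstar_minus[of y] by simp

lemma cstar_norm_le: "norm x \<le> norm (cstar x)" for x :: "'a::cstar_alg"
proof (cases "norm x = 0")
  case True then show ?thesis by simp
next
  case False
  have "norm x * norm x = norm (cstar x * x)" by (simp add: cstar_identity)
  also have "\<dots> \<le> norm (cstar x) * norm x" by (rule norm_mult_ineq)
  finally have "norm x * norm x \<le> norm (cstar x) * norm x" .
  then show ?thesis by (rule mult_right_le_imp_le) (use False in simp)
qed

lemma cstar_norm[simp]: "norm (cstar x) = norm (x::'a::cstar_alg)"
proof -
  have "norm (cstar (cstar x)) = norm x" by (simp only: cstar_cstar)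
  then show ?thesis using cstar_norm_le[of x] cstar_norm_le[of "cstar x"] by linarith
qed

lemma cstar_zero_iff: "cstar w * w = 0 \<Longrightarrow> w = (0::'a::cstar_alg)"
proof -
  assume "cstar w * w = 0"
  then have "norm w * norm w = 0" using cstar_identity[of w] by simp
  then show ?thesis by simp
qed

lemma scaleC_zero_right[simp]: "c *\<^sub>C (0::'a::cvec) = 0"
  using scaleC_add_right[of c "0::'a" 0] by simp

lemma scaleC_minus_one: "(-1) *\<^sub>C (x::'a::cvec) = - x"
  using scaleR_scaleC[of "-1" x] by simp

lemma scaleC_diff_right: "c *\<^sub>C (x - y) = c *\<^sub>C x - c *\<^sub>C (y::'a::cvec)"
  using scaleC_add_right[of c "x - y" y] by (simp add: eq_diff_eq)


lemma cstar_cont: "continuous_on S (cstar :: 'a::cstar_alg \<Rightarrow> 'a)"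
  by (rule lipschitz_on_continuous_on[of 1]) (auto intro!: lipschitz_onI simp: dist_norm cstar_diff[symmetric])

lemma scaleC_cont: "continuous_on S (\<lambda>x::'a::cvec. c *\<^sub>C x)"
  by (rule lipschitz_on_continuous_on[of "cmod c"]) (auto intro!: lipschitz_onI simp: dist_norm scaleC_diff_right[symmetric] norm_scaleC)

lemma closure_agree:
  fixes f h :: "'a::metric_space \<Rightarrow> 'b::real_normed_vector"
  assumes "continuous_on (closure A) f" "continuous_on (closure A) h" "\<And>x. x \<in> A \<Longrightarrow> f x = h x"
    and "x \<in> closure A"
  shows "f x = h x"
proof -
  have "(\<lambda>x. f x - h x) ` closure A \<subseteq> {0}"
    by (rule image_closure_subset) (use assms in \<open>auto intro!: continuous_intros\<close>)
  then show ?thesis using assms(4) by auto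
qed

lemma closure_unop:
  assumes "continuous_on UNIV f" "\<And>x. x \<in> A \<Longrightarrow> f x \<in> A" "x \<in> closure A"
  shows "f x \<in> closure A"
proof -
  have "f ` closure A \<subseteq> closure A"
    by (rule image_closure_subset) (use assms in \<open>auto intro: continuous_on_subset closure_subset[THEN subsetD]\<close>)
  then show ?thesis using assms(3) by auto
qed

lemma closure_binop:
  fixes f :: "'a::metric_space \<Rightarrow> 'a \<Rightarrow> 'a"
  assumes "continuous_on UNIV (\<lambda>p. f (fst p) (snd p))" "\<And>x y. x \<in> A \<Longrightarrow> y \<in> A \<Longrightarrow> f x y \<in> A"
    "x \<in> closure A" "y \<in> closure A"
  shows "f x y \<in> closure A"
proof -
  have "(\<lambda>p. f (fst p) (snd p)) ` closure (A \<times> A) \<subseteq> closure A"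
    by (rule image_closure_subset) (use assms in \<open>auto intro: continuous_on_subset closure_subset[THEN subsetD]\<close>)
  then show ?thesis using assms(3,4) unfolding closure_Times image_subset_iff
    by (drule_tac bspec[of _ _ "(x,y)"]) auto
qed


inductive_set SG :: "('c::cstar_alg \<times> 'c) set \<Rightarrow> ('c \<times> 'c) set" for G where
  base: "(g,l) \<in> G \<Longrightarrow> (g,l) \<in> SG G"
| add: "(x,y) \<in> SG G \<Longrightarrow> (x',y') \<in> SG G \<Longrightarrow> (x+x', y+y') \<in> SG G"
| scl: "(x,y) \<in> SG G \<Longrightarrow> (c *\<^sub>C x, c *\<^sub>C y) \<in> SG G"
| rm: "(x,y) \<in> SG G \<Longrightarrow> h \<in> fst ` G \<Longrightarrow> (x*h, y*h) \<in> SG G"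

definition compat :: "('c::cstar_alg \<times> 'c) set \<Rightarrow> bool" where
  "compat G \<longleftrightarrow> (\<forall>g l g' l'. (g,l) \<in> G \<longrightarrow> (g',l') \<in> G \<longrightarrow>
      cstar l * g' = cstar g * l' \<and> cstar l * l' = cstar g * l')"

lemma SG_compat1:
  assumes "compat G" "(x,y) \<in> SG G" "(g',l') \<in> G"
  shows "cstar y * g' = cstar x * l' \<and> cstar y * l' = cstar x * l'"
  using assms(2)
proof (induction rule: SG.induct)
  case (base g l)
  then show ?case using assms(1,3) unfolding compat_def by auto
next
  case (add x y x' y')
  then show ?case by (simp add: cstar_add distrib_right)
next
  case (scl x y c)
  then show ?case by (simp add: cstar_scaleC scaleC_mult_left)
next
  case (rm x y h)
  then show ?case by (simp add: cstar_mult mult.assoc)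
qed

lemma SG_compat:
  assumes "compat G" "(x,y) \<in> SG G" "(x',y') \<in> SG G"
  shows "cstar y * x' = cstar x * y' \<and> cstar y * y' = cstar x * y'"
  using assms(3)
proof (induction rule: SG.induct)
  case (base g l)
  then show ?case using SG_compat1[OF assms(1,2), of g l] by auto
next
  case (add x1 y1 x2 y2)
  then show ?case by (simp add: distrib_left)
next
  case (scl x1 y1 c)
  then show ?case by (simp add: scaleC_mult_right)
next
  case (rm x1 y1 h)
  then show ?case by (metis mult.assoc)
qed

lemma SG_norm:
  assumes "compat G" "(x,y) \<in> SG G"
  shows "norm y \<le> norm x"
proof (cases "norm y = 0")
  case True then show ?thesis by simp
next
  case False
  have "norm y * norm y = norm (cstar y * y)" by (simp add: cstar_identity)
  also have "\<dots> = norm (cstar x * y)" using SG_compat[OF assms(1,2,2)] by simp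
  also have "\<dots> \<le> norm (cstar x) * norm y" by (rule norm_mult_ineq)
  finally have "norm y * norm y \<le> norm x * norm y" by simp
  then show ?thesis by (rule mult_right_le_imp_le) (use False in simp)
qed

lemma SG_diff:
  assumes "(x,y) \<in> SG G" "(x',y') \<in> SG G"
  shows "(x - x', y - y') \<in> SG G"
proof -
  have "((-1) *\<^sub>C x', (-1) *\<^sub>C y') \<in> SG G" by (rule SG.scl[OF assms(2)])
  then have "(- x', - y') \<in> SG G" by (simp add: scaleC_minus_one)
  from SG.add[OF assms(1) this] show ?thesis by simp
qed

lemma SG_lip:
  assumes "compat G" "(x,y) \<in> SG G" "(x',y') \<in> SG G"
  shows "norm (y - y') \<le> norm (x - x')"
  using SG_norm[OF assms(1) SG_diff[OF assms(2,3)]] .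

lemma SG_fun:
  assumes "compat G" "(x,y) \<in> SG G" "(x,y') \<in> SG G"
  shows "y = y'"
  using SG_lip[OF assms] by simp

lemma SG_idem:
  assumes "\<forall>p\<in>G. (snd p, snd p) \<in> G" "(x,y) \<in> SG G"
  shows "(y,y) \<in> SG G"
  using assms(2)
proof (induction rule: SG.induct)
  case (base g l)
  then have "(l,l) \<in> G" using assms(1) by force
  then show ?case by (rule SG.base)
qed (auto intro: SG.intros)

lemma SG_mult:
  assumes "(x',y') \<in> SG G" "x \<in> fst ` SG G"
  shows "x * x' \<in> fst ` SG G"
  using assms
proof (induction rule: SG.induct)
  case (base g l)
  then obtain y where "(x,y) \<in> SG G" by auto
  from SG.rm[OF this, of g] base show ?case by force
next
  case (add x1 y1 x2 y2)
  then obtain u1 u2 where "(x*x1,u1) \<in> SG G" "(x*x2,u2) \<in> SG G" by force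
  from SG.add[OF this] show ?case by (force simp: distrib_left)
next
  case (scl x1 y1 c)
  then obtain u1 where "(x*x1,u1) \<in> SG G" by force
  from SG.scl[OF this, of c] show ?case by (force simp: scaleC_mult_right)
next
  case (rm x1 y1 h)
  then obtain u1 where "(x*x1,u1) \<in> SG G" by force
  from SG.rm[OF this rm(2)] show ?case by (force simp: mult.assoc)
qed

lemma SG_star:
  assumes "\<forall>p\<in>G. \<exists>l. (cstar (fst p), l) \<in> G" "(x,y) \<in> SG G"
  shows "cstar x \<in> fst ` SG G"
  using assms(2)
proof (induction rule: SG.induct)
  case (base g l0)
  then obtain l where "(cstar g, l) \<in> G" using assms(1) by force
  then show ?case by (force intro: SG.base)
next
  case (add x1 y1 x2 y2)
  then obtain u1 u2 where "(cstar x1,u1) \<in> SG G" "(cstar x2,u2) \<in> SG G" by force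
  from SG.add[OF this] show ?case by (force simp: cstar_add)
next
  case (scl x1 y1 c)
  then obtain u1 where "(cstar x1,u1) \<in> SG G" by force
  from SG.scl[OF this, of "cnj c"] show ?case by (force simp: cstar_scaleC)
next
  case (rm x1 y1 h)
  obtain l where "(cstar h, l) \<in> G" using assms(1) rm(2) by force
  then have "(cstar h, l) \<in> SG G" by (rule SG.base)
  then have hD: "cstar h \<in> fst ` SG G" by force
  obtain u where "(cstar x1, u) \<in> SG G" using rm(3) by force
  from SG_mult[OF this hD] show ?case by (simp add: cstar_mult)
qed

lemma SG_sub:
  assumes "cstar_subalg S" "fst ` G \<subseteq> S" "(x,y) \<in> SG G"
  shows "x \<in> S"
  using assms(3)
proof (induction rule: SG.induct)
  case (base g l)
  then show ?case using assms(2) by force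
qed (use assms(1,2) in \<open>auto simp: cstar_subalg_def\<close>)


lemma closed_cstar_gen: "closed (cstar_gen A)"
  unfolding cstar_gen_def cstar_subalg_def by (rule closed_Inter) auto

lemma abstract_mult:
  fixes G :: "('c::cstar_alg \<times> 'c) set"
  assumes cp: "compat G"
    and st: "\<forall>p\<in>G. \<exists>l. (cstar (fst p), l) \<in> G"
    and id: "\<forall>p\<in>G. (snd p, snd p) \<in> G"
    and ne: "G \<noteq> {}"
  defines "D \<equiv> cstar_gen (fst ` G)"
  shows "\<exists>L. (\<forall>x\<in>D. L x \<in> D \<and> L (L x) = L x \<and> cstar x \<in> D) \<and>
     (\<forall>x\<in>D. \<forall>y\<in>D. x * L y = cstar (L (cstar x)) * y) \<and> (\<forall>p\<in>G. L (fst p) = snd p)"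
proof -
  define D0 where "D0 = fst ` SG G"
  define L0 where "L0 x = (THE y. (x,y) \<in> SG G)" for x
  have L0: "(x, L0 x) \<in> SG G" if xD: "x \<in> D0" for x
  proof -
    obtain y where y: "(x,y) \<in> SG G" using xD unfolding D0_def by force
    have "L0 x = y" unfolding L0_def
      by (rule the_equality[where P="\<lambda>y. (x,y) \<in> SG G", OF y]) (use SG_fun[OF cp y] in auto)
    then show ?thesis using y by simp
  qed
  have L0eq: "L0 x = y" if "(x,y) \<in> SG G" for x y
    using SG_fun[OF cp that L0[of x]] that unfolding D0_def by force
  have "1-lipschitz_on D0 L0"
    by (rule lipschitz_onI) (auto simp: dist_norm intro: SG_lip[OF cp L0 L0])
  then have uc: "uniformly_continuous_on D0 L0" by (rule lipschitz_on_uniformly_continuous)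
  obtain L where Lc: "uniformly_continuous_on (closure D0) L" and LL0: "\<And>x. x \<in> D0 \<Longrightarrow> L0 x = L x"
    using uniformly_continuous_on_extension_on_closure[OF uc] by metis
  have Lcont: "continuous_on (closure D0) L" using Lc by (rule uniformly_continuous_imp_continuous)
  have D0E: "\<exists>y. (x,y) \<in> SG G" if "x \<in> D0" for x
    using that unfolding D0_def by auto
  have D0I: "x \<in> D0" if "(x,y) \<in> SG G" for x y
    using that unfolding D0_def by (rule rev_image_eqI) simp
  have D0star: "cstar x \<in> D0" if xD: "x \<in> D0" for x
  proof -
    obtain y where "(x,y) \<in> SG G" using D0E[OF xD] by blast
    from SG_star[OF st this] show ?thesis unfolding D0_def .
  qed
  have D0L: "L x \<in> D0" if "x \<in> D0" for x
  proof -
    have "(L0 x, L0 x) \<in> SG G" by (rule SG_idem[OF id L0[OF that]])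
    then have "L0 x \<in> D0" by (rule D0I)
    then show ?thesis using LL0[OF that] by simp
  qed
  have D0add: "x + y \<in> D0" if xD: "x \<in> D0" "y \<in> D0" for x y
  proof -
    obtain u v where "(x,u) \<in> SG G" "(y,v) \<in> SG G" using D0E xD by blast
    from SG.add[OF this] show ?thesis by (rule D0I)
  qed
  have D0mult: "x * y \<in> D0" if xD: "x \<in> D0" "y \<in> D0" for x y
  proof -
    obtain v where "(y,v) \<in> SG G" using D0E xD by blast
    from SG_mult[OF this] xD show ?thesis unfolding D0_def by blast
  qed
  have D0scl: "c *\<^sub>C x \<in> D0" if xD: "x \<in> D0" for x c
  proof -
    obtain u where "(x,u) \<in> SG G" using D0E xD by blast
    from SG.scl[OF this] show ?thesis by (rule D0I)
  qed
  have gD0: "fst ` G \<subseteq> D0"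
  proof
    fix g assume "g \<in> fst ` G"
    then obtain l where "(g,l) \<in> G" by force
    then show "g \<in> D0" by (rule D0I[OF SG.base])
  qed
  have cstar_closure: "cstar x \<in> closure D0" if "x \<in> closure D0" for x
    by (rule closure_unop[OF cstar_cont D0star that])
  have sub: "cstar_subalg (closure D0)"
    unfolding cstar_subalg_def
  proof (intro conjI ballI allI)
    show "closed (closure D0)" by simp
    obtain p where "p \<in> G" using ne by auto
    then have "0 *\<^sub>C fst p \<in> D0" using gD0 D0scl by auto
    moreover have "0 *\<^sub>C fst p = 0"
      using scaleC_add_left[of 0 0 "fst p"] by simp
    ultimately show "0 \<in> closure D0" using closure_subset by auto
  next
    fix x y assume "x \<in> closure D0" "y \<in> closure D0"
    then show "x + y \<in> closure D0"
      by (intro closure_binop[where f="(+)"]) (auto intro!: continuous_intros D0add)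
  next
    fix x y assume "x \<in> closure D0" "y \<in> closure D0"
    then show "x * y \<in> closure D0"
      by (intro closure_binop[where f="(*)"]) (auto intro!: continuous_intros D0mult)
  next
    fix x c assume "x \<in> closure D0"
    then show "c *\<^sub>C x \<in> closure D0"
      by (intro closure_unop[OF scaleC_cont]) (auto intro: D0scl)
  next
    fix x assume "x \<in> closure D0"
    then show "cstar x \<in> closure D0" by (rule cstar_closure)
  qed
  have DD0: "D = closure D0"
  proof
    have "closure D0 \<in> {S. cstar_subalg S \<and> fst ` G \<subseteq> S}"
      using sub gD0 closure_subset by blast
    then show "D \<subseteq> closure D0" unfolding D_def cstar_gen_def by (rule Inter_lower)
    have "D0 \<subseteq> D"
    proof
      fix x assume "x \<in> D0"
      then obtain y where "(x,y) \<in> SG G" using D0E by blast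
      then show "x \<in> D" unfolding D_def cstar_gen_def using SG_sub by blast
    qed
    then show "closure D0 \<subseteq> D"
      using closed_cstar_gen unfolding D_def by (rule closure_minimal)
  qed
  have Lclos: "L x \<in> closure D0" if "x \<in> closure D0" for x
  proof -
    have "L ` closure D0 \<subseteq> closure D0"
      by (rule image_closure_subset[OF Lcont]) (use D0L closure_subset in auto)
    then show ?thesis using that by auto
  qed
  have Lidem: "L (L x) = L x" if "x \<in> closure D0" for x
  proof (rule closure_agree[OF _ Lcont _ that])
    show "continuous_on (closure D0) (\<lambda>x. L (L x))"
      by (rule continuous_on_compose2[OF Lcont Lcont]) (use Lclos in auto)
    fix x assume x: "x \<in> D0"
    have "(L0 x, L0 x) \<in> SG G" by (rule SG_idem[OF id L0[OF x]])
    then have "L0 (L0 x) = L0 x" by (rule L0eq)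
    moreover have "L0 x \<in> D0" using \<open>(L0 x, L0 x) \<in> SG G\<close> unfolding D0_def by force
    ultimately show "L (L x) = L x" using LL0[OF x] LL0[of "L0 x"] by simp
  qed
  have contR: "continuous_on (closure D0) (\<lambda>x. cstar (L (cstar x)))"
  proof -
    have c1: "continuous_on (closure D0) (\<lambda>x. L (cstar x))"
      by (rule continuous_on_compose2[OF Lcont cstar_cont]) (use cstar_closure in auto)
    show ?thesis by (rule continuous_on_compose2[OF cstar_cont[of UNIV] c1]) simp
  qed
  have dc0: "x * L y = cstar (L (cstar x)) * y" if "x \<in> D0" "y \<in> D0" for x y
  proof -
    have "cstar (L0 (cstar x)) * y = cstar (cstar x) * L0 y"
      using SG_compat[OF cp L0[OF D0star[OF that(1)]] L0[OF that(2)]] by simp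
    then show ?thesis using LL0 that D0star by (simp add: cstar_cstar)
  qed
  have dc1: "x * L y = cstar (L (cstar x)) * y" if "x \<in> closure D0" "y \<in> D0" for x y
  proof (rule closure_agree[OF _ _ _ that(1), where f="\<lambda>x. x * L y"])
    show "continuous_on (closure D0) (\<lambda>x. x * L y)" by (intro continuous_intros)
    show "continuous_on (closure D0) (\<lambda>x. cstar (L (cstar x)) * y)"
      by (intro continuous_intros contR)
  qed (use dc0 that in auto)
  have dc2: "x * L y = cstar (L (cstar x)) * y" if "x \<in> closure D0" "y \<in> closure D0" for x y
  proof (rule closure_agree[OF _ _ _ that(2), where f="\<lambda>y. x * L y"])
    show "continuous_on (closure D0) (\<lambda>y. x * L y)" by (intro continuous_intros Lcont)
    show "continuous_on (closure D0) (\<lambda>y. cstar (L (cstar x)) * y)"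
      by (intro continuous_intros)
  qed (use dc1 that in auto)
  have gen: "L (fst p) = snd p" if "p \<in> G" for p
  proof -
    have "(fst p, snd p) \<in> SG G" using that by (intro SG.base) simp
    then have "L0 (fst p) = snd p" by (rule L0eq)
    then show ?thesis using LL0 gD0 that by force
  qed
  show ?thesis
    apply (rule exI[of _ L])
    unfolding DD0 using Lclos Lidem cstar_closure dc2 gen by blast
qed


locale tailrep =
  fixes ip :: "'x::cbanach \<Rightarrow> 'x \<Rightarrow> 'a::cstar_alg"
    and rmul :: "'x \<Rightarrow> 'a \<Rightarrow> 'x"
    and phi :: "'a \<Rightarrow> 'x \<Rightarrow> 'x"
    and rpi :: "'a \<times> (nat \<Rightarrow> 'a) \<Rightarrow> 'c::cstar_alg"
    and t :: "'x \<times> (nat \<Rightarrow> 'a) \<Rightarrow> 'c"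
  assumes corr: "cstar_correspondence ip rmul phi"
    and rep: "is_rep ip rmul phi rpi t"
begin

abbreviation "Tl \<equiv> tail phi"

lemma ip_add2[rule_format]: "\<forall>x y z. ip x (y + z) = ip x y + ip x z"
  using corr unfolding cstar_correspondence_def hilbert_module_def by (elim conjE) assumption
lemma ip_sym[rule_format]: "\<forall>x y. ip y x = cstar (ip x y)"
  using corr unfolding cstar_correspondence_def hilbert_module_def by (elim conjE) assumption
lemma ip_def0[rule_format]: "\<forall>x. ip x x = 0 \<longrightarrow> x = 0"
  using corr unfolding cstar_correspondence_def hilbert_module_def by (elim conjE) assumption
lemma rmul_add2[rule_format]: "\<forall>x a b. rmul x (a + b) = rmul x a + rmul x b"
  using corr unfolding cstar_correspondence_def hilbert_module_def by (elim conjE) assumption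
lemma phi_add[rule_format]: "\<forall>a b x. phi (a + b) x = phi a x + phi b x"
  using corr unfolding cstar_correspondence_def by (elim conjE) assumption
lemma phi_mult[rule_format]: "\<forall>a b x. phi (a * b) x = phi a (phi b x)"
  using corr unfolding cstar_correspondence_def by (elim conjE) assumption
lemma phi_adj[rule_format]: "\<forall>a x y. ip (phi (cstar a) x) y = ip x (phi a y)"
  using corr unfolding cstar_correspondence_def by (elim conjE) assumption
lemma phi_adjointable[rule_format]: "\<forall>a. adjointable ip (phi a)"
  using corr unfolding cstar_correspondence_def by (elim conjE) assumption

lemma ip_zero2[simp]: "ip x 0 = 0"
  using ip_add2[of x 0 0] by simp
lemma ip_zero1[simp]: "ip 0 y = 0"
proof -
  have "ip 0 y = cstar (ip y 0)" by (rule ip_sym)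
  then show ?thesis by simp
qed
lemma rmul_zero2[simp]: "rmul x 0 = 0"
  using rmul_add2[of x 0 0] by simp
lemma phi_zero1[simp]: "phi 0 x = 0"
  using phi_add[of 0 0 x] by simp
lemma phi_zero2[simp]: "phi a 0 = 0"
proof -
  obtain S' where S': "\<And>x y. ip (phi a x) y = ip x (S' y)"
    using phi_adjointable[of a] unfolding adjointable_def by blast
  have "ip (phi a 0) (phi a 0) = 0" using S'[of 0] by simp
  then show ?thesis by (rule ip_def0)
qed

lemma ker_star: "b \<in> ker_phi phi \<Longrightarrow> cstar b \<in> ker_phi phi"
  unfolding ker_phi_def
proof safe
  fix x assume "\<forall>x. phi b x = 0"
  then have "ip (phi (cstar b) x) (phi (cstar b) x) = 0" using phi_adj[of b x] by simp
  then show "phi (cstar b) x = 0" by (rule ip_def0)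
qed

lemma ker_mult: "a \<in> ker_phi phi \<Longrightarrow> b \<in> ker_phi phi \<Longrightarrow> a * b \<in> ker_phi phi"
  unfolding ker_phi_def by (simp add: phi_mult)

lemma ker_zero: "0 \<in> ker_phi phi"
  unfolding ker_phi_def by simp

definition ef :: "(nat \<Rightarrow> 'a) \<Rightarrow> nat \<Rightarrow> 'a" where
  "ef f = (\<lambda>n. if n = 0 then f 0 else 0)"
definition sf :: "(nat \<Rightarrow> 'a) \<Rightarrow> nat \<Rightarrow> 'a" where
  "sf f = (\<lambda>n. if n = 0 then 0 else f n)"

lemma tail_ker: "f \<in> Tl \<Longrightarrow> f n \<in> ker_phi phi"
  unfolding tail_def by blast

lemma tail_lim: "f \<in> Tl \<Longrightarrow> (\<lambda>n. norm (f n)) \<longlonglongrightarrow> 0"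
  unfolding tail_def by blast

lemma tail_le:
  assumes "f \<in> Tl" "\<And>n. g n \<in> ker_phi phi" "\<And>n. norm (g n) \<le> norm (f n)"
  shows "g \<in> Tl"
proof -
  have lim: "(\<lambda>n. norm (f n)) \<longlonglongrightarrow> 0" using assms(1) by (rule tail_lim)
  have "\<forall>\<^sub>F n in sequentially. norm (norm (g n)) \<le> norm (f n)"
    using assms(3) by (intro always_eventually) simp
  then have "(\<lambda>n. norm (g n)) \<longlonglongrightarrow> 0"
    by (rule Lim_null_comparison[OF _ lim])
  then show ?thesis using assms(2) unfolding tail_def by blast
qed

lemma tail_z[simp]: "(\<lambda>n. 0) \<in> Tl"
  unfolding tail_def using ker_zero by simp

lemma tail_ef: "f \<in> Tl \<Longrightarrow> ef f \<in> Tl"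
  by (rule tail_le[of f]) (simp_all add: ef_def ker_zero tail_ker)

lemma tail_sf: "f \<in> Tl \<Longrightarrow> sf f \<in> Tl"
  by (rule tail_le[of f]) (simp_all add: sf_def ker_zero tail_ker)

lemma tail_star: "f \<in> Tl \<Longrightarrow> (\<lambda>n. cstar (f n)) \<in> Tl"
  by (rule tail_le[of f]) (simp_all add: ker_star tail_ker)

lemma tail_mult: "f \<in> Tl \<Longrightarrow> g \<in> Tl \<Longrightarrow> (\<lambda>n. f n * g n) \<in> Tl"
proof -
  assume f: "f \<in> Tl" and g: "g \<in> Tl"
  have lim: "(\<lambda>n. norm (f n) * norm (g n)) \<longlonglongrightarrow> 0 * 0"
    by (intro tendsto_mult tail_lim f g)
  have "\<forall>\<^sub>F n in sequentially. norm (norm (f n * g n)) \<le> norm (f n) * norm (g n)"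
    by (intro always_eventually allI) (simp add: norm_mult_ineq)
  then have "(\<lambda>n. norm (f n * g n)) \<longlonglongrightarrow> 0"
    by (rule Lim_null_comparison) (use lim in simp)
  then show ?thesis using f g unfolding tail_def by (auto intro: ker_mult)
qed

lemma ef_ef[simp]: "ef (ef f) = ef f"
  unfolding ef_def by auto


lemma rep1: "\<forall>a f a' f'. f \<in> Tl \<longrightarrow> f' \<in> Tl \<longrightarrow>
        rpi (B_add (a, f) (a', f')) = rpi (a, f) + rpi (a', f') \<and>
        rpi (B_mult (a, f) (a', f')) = rpi (a, f) * rpi (a', f')"
  using rep unfolding is_rep_def by (elim conjE) assumption
lemma rep2: "\<forall>a f c. f \<in> Tl \<longrightarrow>
        rpi (B_scale c (a, f)) = c *\<^sub>C rpi (a, f) \<and>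
        rpi (B_star (a, f)) = cstar (rpi (a, f))"
  using rep unfolding is_rep_def by (elim conjE) assumption
lemma rep3: "\<forall>\<xi> f \<nu> g. f \<in> Tl \<longrightarrow> g \<in> Tl \<longrightarrow>
        t (Y_add (\<xi>, f) (\<nu>, g)) = t (\<xi>, f) + t (\<nu>, g) \<and>
        cstar (t (\<xi>, f)) * t (\<nu>, g) = rpi (Y_ip ip (\<xi>, f) (\<nu>, g))"
  using rep unfolding is_rep_def by (elim conjE) assumption
lemma rep5: "\<forall>a f \<xi> g. f \<in> Tl \<longrightarrow> g \<in> Tl \<longrightarrow>
        t (Y_lmul phi (a, f) (\<xi>, g)) = rpi (a, f) * t (\<xi>, g) \<and>
        t (Y_rmul rmul (\<xi>, g) (a, f)) = t (\<xi>, g) * rpi (a, f)"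
  using rep unfolding is_rep_def by (elim conjE) assumption

lemma PP: "f \<in> Tl \<Longrightarrow> g \<in> Tl \<Longrightarrow> rpi (a,f) * rpi (b,g) = rpi (a * b, \<lambda>n. f n * g n)"
  using rep1 unfolding B_mult_def by simp
lemma Pstar: "f \<in> Tl \<Longrightarrow> cstar (rpi (a,f)) = rpi (cstar a, \<lambda>n. cstar (f n))"
  using rep2 unfolding B_star_def by simp
lemma TT: "f \<in> Tl \<Longrightarrow> g \<in> Tl \<Longrightarrow> cstar (t (\<xi>,f)) * t (\<nu>,g) = rpi (ip \<xi> \<nu>, \<lambda>n. cstar (f n) * g n)"
  using rep3 unfolding Y_ip_def by simp
lemma PT: "f \<in> Tl \<Longrightarrow> g \<in> Tl \<Longrightarrow>
    rpi (a,f) * t (\<xi>,g) = t (phi a \<xi>, \<lambda>n. if n = 0 then a * g 0 else f (n - 1) * g n)"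
proof -
  assume "f \<in> Tl" "g \<in> Tl"
  then have "t (Y_lmul phi (a, f) (\<xi>, g)) = rpi (a, f) * t (\<xi>, g)" using rep5 by blast
  then show ?thesis unfolding Y_lmul_def fst_conv snd_conv by simp
qed
lemma TP: "f \<in> Tl \<Longrightarrow> g \<in> Tl \<Longrightarrow> t (\<xi>,g) * rpi (a,f) = t (rmul \<xi> a, \<lambda>n. g n * f n)"
  using rep5 unfolding Y_rmul_def by simp
lemma Tadd: "f \<in> Tl \<Longrightarrow> g \<in> Tl \<Longrightarrow> t (\<xi> + \<nu>, \<lambda>n. f n + g n) = t (\<xi>,f) + t (\<nu>,g)"
  using rep3 unfolding Y_add_def by simp

lemma T0[simp]: "t (0, \<lambda>n. 0) = 0"
  using Tadd[of "\<lambda>n. 0" "\<lambda>n. 0" 0 0] by simp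

lemma Tsplit: "f \<in> Tl \<Longrightarrow> t (\<xi>,f) = t (\<xi>, \<lambda>n. 0) + t (0,f)"
  using Tadd[of "\<lambda>n. 0" f \<xi> 0] by simp

lemma Tsplit2: "f \<in> Tl \<Longrightarrow> t (\<xi>,f) = t (\<xi>, ef f) + t (0, sf f)"
proof -
  assume f: "f \<in> Tl"
  have "(\<lambda>n. ef f n + sf f n) = f" by (auto simp: ef_def sf_def)
  then show ?thesis using Tadd[OF tail_ef[OF f] tail_sf[OF f], of \<xi> 0] by simp
qed

lemma cstar_mult_swap: "cstar x * y = cstar (cstar y * x)"
  by (simp add: cstar_mult cstar_cstar)

lemma Z1: "f \<in> Tl \<Longrightarrow> h \<in> Tl \<Longrightarrow> t (0,f) * t (\<xi>, ef h) = 0"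
proof -
  assume f: "f \<in> Tl" and h: "h \<in> Tl"
  let ?w = "t (0,f) * t (\<xi>, ef h)"
  have "cstar ?w * ?w = cstar (t (\<xi>, ef h)) * ((cstar (t (0,f)) * t (0,f)) * t (\<xi>, ef h))"
    by (simp add: cstar_mult mult.assoc)
  also have "cstar (t (0,f)) * t (0,f) = rpi (0, \<lambda>n. cstar (f n) * f n)"
    using TT[OF f f] by simp
  also have "rpi (0, \<lambda>n. cstar (f n) * f n) * t (\<xi>, ef h) =
      t (phi 0 \<xi>, \<lambda>n. if n = 0 then 0 * ef h 0 else (cstar (f (n - 1)) * f (n - 1)) * ef h n)"
    by (rule PT[OF tail_mult[OF tail_star[OF f] f] tail_ef[OF h]])
  also have "(\<lambda>n. if n = 0 then 0 * ef h 0 else (cstar (f (n - 1)) * f (n - 1)) * ef h n) = (\<lambda>n. 0)"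
    by (auto simp: ef_def)
  also have "phi 0 \<xi> = 0" by simp
  finally have "cstar ?w * ?w = 0" by simp
  then show ?thesis by (rule cstar_zero_iff)
qed

lemma Z2: "k \<in> Tl \<Longrightarrow> k 0 = 0 \<Longrightarrow> t (\<nu>, \<lambda>n. 0) * t (0, k) = 0"
proof -
  assume k: "k \<in> Tl" and k0: "k 0 = 0"
  let ?w = "t (\<nu>, \<lambda>n. 0) * t (0, k)"
  have "cstar ?w * ?w = cstar (t (0, k)) * ((cstar (t (\<nu>, \<lambda>n. 0)) * t (\<nu>, \<lambda>n. 0)) * t (0, k))"
    by (simp add: cstar_mult mult.assoc)
  also have "cstar (t (\<nu>, \<lambda>n. 0)) * t (\<nu>, \<lambda>n. 0) = rpi (ip \<nu> \<nu>, \<lambda>n. 0)"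
    using TT[OF tail_z tail_z] by simp
  also have "rpi (ip \<nu> \<nu>, \<lambda>n. 0) * t (0, k) =
      t (phi (ip \<nu> \<nu>) 0, \<lambda>n. if n = 0 then ip \<nu> \<nu> * k 0 else 0 * k n)"
    by (rule PT[OF tail_z k])
  also have "(\<lambda>n. if n = 0 then ip \<nu> \<nu> * k 0 else 0 * k n) = (\<lambda>n. 0)"
    using k0 by auto
  also have "phi (ip \<nu> \<nu>) 0 = 0" by simp
  finally have "cstar ?w * ?w = 0" by simp
  then show ?thesis by (rule cstar_zero_iff)
qed

lemma Z3: "f \<in> Tl \<Longrightarrow> t (0,f) * cstar (t (\<nu>, \<lambda>n. 0)) = 0"
proof -
  assume f: "f \<in> Tl"
  let ?w = "t (0,f) * cstar (t (\<nu>, \<lambda>n. 0))"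
  have "cstar ?w * ?w = t (\<nu>, \<lambda>n. 0) * (cstar (t (0,f)) * t (0,f)) * cstar (t (\<nu>, \<lambda>n. 0))"
    by (simp add: cstar_mult mult.assoc cstar_cstar)
  also have "cstar (t (0,f)) * t (0,f) = rpi (0, \<lambda>n. cstar (f n) * f n)"
    using TT[OF f f] by simp
  also have "t (\<nu>, \<lambda>n. 0) * rpi (0, \<lambda>n. cstar (f n) * f n) = t (0, \<lambda>n. 0)"
    using TP[OF tail_mult[OF tail_star[OF f] f] tail_z, of \<nu> 0] by simp
  finally have "cstar ?w * ?w = 0" by simp
  then show ?thesis by (rule cstar_zero_iff)
qed

lemma Z3': "f \<in> Tl \<Longrightarrow> t (\<nu>, \<lambda>n. 0) * cstar (t (0,f)) = 0"
proof -
  assume f: "f \<in> Tl"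
  have "t (\<nu>, \<lambda>n. 0) * cstar (t (0,f)) = cstar (t (0,f) * cstar (t (\<nu>, \<lambda>n. 0)))"
    by (simp add: cstar_mult cstar_cstar)
  then show ?thesis using Z3[OF f] by simp
qed

lemma cc: "cstar x * cstar y = cstar (y * x)"
  by (simp add: cstar_mult)

lemma C_PP: "f \<in> Tl \<Longrightarrow> h \<in> Tl \<Longrightarrow>
  cstar (rpi (a, \<lambda>n. 0)) * rpi (b,h) = cstar (rpi (a,f)) * rpi (b, \<lambda>n. 0) \<and>
  cstar (rpi (a, \<lambda>n. 0)) * rpi (b, \<lambda>n. 0) = cstar (rpi (a,f)) * rpi (b, \<lambda>n. 0)"
  by (simp add: Pstar PP tail_star)

lemma C_PT: "f \<in> Tl \<Longrightarrow> h \<in> Tl \<Longrightarrow>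
  cstar (rpi (a, \<lambda>n. 0)) * t (\<nu>,h) = cstar (rpi (a,f)) * t (\<nu>, ef h) \<and>
  cstar (rpi (a, \<lambda>n. 0)) * t (\<nu>, ef h) = cstar (rpi (a,f)) * t (\<nu>, ef h)"
proof -
  assume f: "f \<in> Tl" and h: "h \<in> Tl"
  have e1: "(\<lambda>n. if n = 0 then cstar a * h 0 else 0 * h n) =
      (\<lambda>n. if n = 0 then cstar a * ef h 0 else cstar (f (n - 1)) * ef h n)"
    by (auto simp: ef_def)
  have e2: "(\<lambda>n. if n = 0 then cstar a * ef h 0 else 0 * ef h n) =
      (\<lambda>n. if n = 0 then cstar a * ef h 0 else cstar (f (n - 1)) * ef h n)"
    by (auto simp: ef_def)
  show ?thesis
    using PT[OF tail_z h, of "cstar a" \<nu>] PT[OF tail_star[OF f] tail_ef[OF h], of "cstar a" \<nu>]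
      PT[OF tail_z tail_ef[OF h], of "cstar a" \<nu>] e1 e2
    by (simp add: Pstar f)
qed

lemma C_PTs: "f \<in> Tl \<Longrightarrow> h \<in> Tl \<Longrightarrow>
  cstar (rpi (a, \<lambda>n. 0)) * cstar (t (\<nu>,h)) = cstar (rpi (a,f)) * cstar (t (\<nu>, \<lambda>n. 0)) \<and>
  cstar (rpi (a, \<lambda>n. 0)) * cstar (t (\<nu>, \<lambda>n. 0)) = cstar (rpi (a,f)) * cstar (t (\<nu>, \<lambda>n. 0))"
  by (simp only: cc) (simp add: TP)

lemma C_TP: "f \<in> Tl \<Longrightarrow> h \<in> Tl \<Longrightarrow>
  cstar (t (\<xi>, ef f)) * rpi (b,h) = cstar (t (\<xi>,f)) * rpi (b, \<lambda>n. 0) \<and>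
  cstar (t (\<xi>, ef f)) * rpi (b, \<lambda>n. 0) = cstar (t (\<xi>,f)) * rpi (b, \<lambda>n. 0)"
proof -
  assume f: "f \<in> Tl" and h: "h \<in> Tl"
  have e: "cstar x * y = cstar (cstar y * x)" for x y :: 'c by (rule cstar_mult_swap)
  have e1: "(\<lambda>n. if n = 0 then cstar b * ef f 0 else cstar (h (n - 1)) * ef f n) =
      (\<lambda>n. if n = 0 then cstar b * f 0 else 0 * f n)"
    by (auto simp: ef_def)
  have e2: "(\<lambda>n. if n = 0 then cstar b * ef f 0 else 0 * ef f n) =
      (\<lambda>n. if n = 0 then cstar b * f 0 else 0 * f n)"
    by (auto simp: ef_def)
  show ?thesis
    apply (simp only: e[of "t (\<xi>, ef f)"] e[of "t (\<xi>, f)"])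
    using PT[OF tail_star[OF h] tail_ef[OF f], of "cstar b" \<xi>] PT[OF tail_z f, of "cstar b" \<xi>]
      PT[OF tail_z tail_ef[OF f], of "cstar b" \<xi>] e1 e2
    by (simp add: Pstar h)
qed

lemma C_TT: "f \<in> Tl \<Longrightarrow> h \<in> Tl \<Longrightarrow>
  cstar (t (\<xi>, ef f)) * t (\<nu>,h) = cstar (t (\<xi>,f)) * t (\<nu>, ef h) \<and>
  cstar (t (\<xi>, ef f)) * t (\<nu>, ef h) = cstar (t (\<xi>,f)) * t (\<nu>, ef h)"
proof -
  assume f: "f \<in> Tl" and h: "h \<in> Tl"
  have e1: "(\<lambda>n. cstar (ef f n) * h n) = (\<lambda>n. cstar (f n) * ef h n)"
    by (auto simp: ef_def)
  have e2: "(\<lambda>n. cstar (ef f n) * ef h n) = (\<lambda>n. cstar (f n) * ef h n)"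
    by (auto simp: ef_def)
  show ?thesis
    using TT[OF tail_ef[OF f] h] TT[OF f tail_ef[OF h]] TT[OF tail_ef[OF f] tail_ef[OF h]] e1 e2
    by simp
qed

lemma tt1: "f \<in> Tl \<Longrightarrow> h \<in> Tl \<Longrightarrow> t (\<nu>,h) * t (\<xi>, ef f) = t (\<nu>, \<lambda>n. 0) * t (\<xi>, ef f)"
proof -
  assume f: "f \<in> Tl" and h: "h \<in> Tl"
  have "t (\<nu>,h) * t (\<xi>, ef f) = (t (\<nu>, \<lambda>n. 0) + t (0,h)) * t (\<xi>, ef f)"
    by (subst Tsplit[OF h]) (rule refl)
  also have "\<dots> = t (\<nu>, \<lambda>n. 0) * t (\<xi>, ef f)"
    by (simp add: distrib_right Z1[OF h f])
  finally show ?thesis .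
qed

lemma tt2: "f \<in> Tl \<Longrightarrow> t (\<nu>, \<lambda>n. 0) * t (\<xi>, f) = t (\<nu>, \<lambda>n. 0) * t (\<xi>, ef f)"
proof -
  assume f: "f \<in> Tl"
  have "t (\<nu>, \<lambda>n. 0) * t (\<xi>, f) = t (\<nu>, \<lambda>n. 0) * (t (\<xi>, ef f) + t (0, sf f))"
    by (subst Tsplit2[OF f]) (rule refl)
  also have "\<dots> = t (\<nu>, \<lambda>n. 0) * t (\<xi>, ef f)"
    using Z2[OF tail_sf[OF f], of \<nu>] by (simp add: distrib_left sf_def)
  finally show ?thesis .
qed

lemma tt3a: "h \<in> Tl \<Longrightarrow> t (\<xi>, \<lambda>n. 0) * cstar (t (\<nu>, h)) = t (\<xi>, \<lambda>n. 0) * cstar (t (\<nu>, \<lambda>n. 0))"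
proof -
  assume h: "h \<in> Tl"
  have "t (\<xi>, \<lambda>n. 0) * cstar (t (\<nu>, h)) = t (\<xi>, \<lambda>n. 0) * cstar (t (\<nu>, \<lambda>n. 0) + t (0,h))"
    by (subst Tsplit[OF h]) (rule refl)
  also have "\<dots> = t (\<xi>, \<lambda>n. 0) * cstar (t (\<nu>, \<lambda>n. 0))"
    by (simp add: distrib_left cstar_add Z3'[OF h])
  finally show ?thesis .
qed

lemma tt3b: "f \<in> Tl \<Longrightarrow> t (\<xi>, f) * cstar (t (\<nu>, \<lambda>n. 0)) = t (\<xi>, \<lambda>n. 0) * cstar (t (\<nu>, \<lambda>n. 0))"
proof -
  assume f: "f \<in> Tl"
  have "t (\<xi>, f) * cstar (t (\<nu>, \<lambda>n. 0)) = (t (\<xi>, \<lambda>n. 0) + t (0,f)) * cstar (t (\<nu>, \<lambda>n. 0))"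
    by (subst Tsplit[OF f]) (rule refl)
  also have "\<dots> = t (\<xi>, \<lambda>n. 0) * cstar (t (\<nu>, \<lambda>n. 0))"
    by (simp add: distrib_right Z3[OF f])
  finally show ?thesis .
qed

lemma C_TTs: "f \<in> Tl \<Longrightarrow> h \<in> Tl \<Longrightarrow>
  cstar (t (\<xi>, ef f)) * cstar (t (\<nu>,h)) = cstar (t (\<xi>,f)) * cstar (t (\<nu>, \<lambda>n. 0)) \<and>
  cstar (t (\<xi>, ef f)) * cstar (t (\<nu>, \<lambda>n. 0)) = cstar (t (\<xi>,f)) * cstar (t (\<nu>, \<lambda>n. 0))"
proof -
  assume f: "f \<in> Tl" and h: "h \<in> Tl"
  show ?thesis by (simp only: cc tt1[OF f h] tt2[OF f])
qed

lemma C_TsP: "f \<in> Tl \<Longrightarrow> h \<in> Tl \<Longrightarrow>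
  cstar (cstar (t (\<xi>, \<lambda>n. 0))) * rpi (b,h) = cstar (cstar (t (\<xi>,f))) * rpi (b, \<lambda>n. 0) \<and>
  cstar (cstar (t (\<xi>, \<lambda>n. 0))) * rpi (b, \<lambda>n. 0) = cstar (cstar (t (\<xi>,f))) * rpi (b, \<lambda>n. 0)"
  by (simp add: cstar_cstar TP)

lemma C_TsT: "f \<in> Tl \<Longrightarrow> h \<in> Tl \<Longrightarrow>
  cstar (cstar (t (\<xi>, \<lambda>n. 0))) * t (\<nu>,h) = cstar (cstar (t (\<xi>,f))) * t (\<nu>, ef h) \<and>
  cstar (cstar (t (\<xi>, \<lambda>n. 0))) * t (\<nu>, ef h) = cstar (cstar (t (\<xi>,f))) * t (\<nu>, ef h)"
proof -
  assume f: "f \<in> Tl" and h: "h \<in> Tl"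
  have a: "t (\<xi>, f) * t (\<nu>, ef h) = t (\<xi>, \<lambda>n. 0) * t (\<nu>, ef h)" by (rule tt1[OF h f])
  have b: "t (\<xi>, \<lambda>n. 0) * t (\<nu>, h) = t (\<xi>, \<lambda>n. 0) * t (\<nu>, ef h)" by (rule tt2[OF h])
  show ?thesis by (simp only: cstar_cstar a b)
qed

lemma C_TsTs: "f \<in> Tl \<Longrightarrow> h \<in> Tl \<Longrightarrow>
  cstar (cstar (t (\<xi>, \<lambda>n. 0))) * cstar (t (\<nu>,h)) = cstar (cstar (t (\<xi>,f))) * cstar (t (\<nu>, \<lambda>n. 0)) \<and>
  cstar (cstar (t (\<xi>, \<lambda>n. 0))) * cstar (t (\<nu>, \<lambda>n. 0)) = cstar (cstar (t (\<xi>,f))) * cstar (t (\<nu>, \<lambda>n. 0))"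
proof -
  assume f: "f \<in> Tl" and h: "h \<in> Tl"
  have a: "t (\<xi>, f) * cstar (t (\<nu>, \<lambda>n. 0)) = t (\<xi>, \<lambda>n. 0) * cstar (t (\<nu>, \<lambda>n. 0))"
    by (rule tt3b[OF f])
  have b: "t (\<xi>, \<lambda>n. 0) * cstar (t (\<nu>, h)) = t (\<xi>, \<lambda>n. 0) * cstar (t (\<nu>, \<lambda>n. 0))"
    by (rule tt3a[OF h])
  show ?thesis by (simp only: cstar_cstar a b)
qed

definition GG :: "('c \<times> 'c) set" where
  "GG = {(rpi (a,f), rpi (a, \<lambda>n. 0)) | a f. f \<in> Tl} \<union> {(t (\<xi>,f), t (\<xi>, ef f)) | \<xi> f. f \<in> Tl}
     \<union> {(cstar (t (\<xi>,f)), cstar (t (\<xi>, \<lambda>n. 0))) | \<xi> f. f \<in> Tl}"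

lemma GG_cases:
  assumes "(g,l) \<in> GG"
  obtains (P) a f where "f \<in> Tl" "g = rpi (a,f)" "l = rpi (a, \<lambda>n. 0)"
    | (T) \<xi> f where "f \<in> Tl" "g = t (\<xi>,f)" "l = t (\<xi>, ef f)"
    | (Ts) \<xi> f where "f \<in> Tl" "g = cstar (t (\<xi>,f))" "l = cstar (t (\<xi>, \<lambda>n. 0))"
  using assms unfolding GG_def by blast

lemma GG_P: "f \<in> Tl \<Longrightarrow> (rpi (a,f), rpi (a, \<lambda>n. 0)) \<in> GG"
  unfolding GG_def by blast
lemma GG_T: "f \<in> Tl \<Longrightarrow> (t (\<xi>,f), t (\<xi>, ef f)) \<in> GG"
  unfolding GG_def by blast
lemma GG_Ts: "f \<in> Tl \<Longrightarrow> (cstar (t (\<xi>,f)), cstar (t (\<xi>, \<lambda>n. 0))) \<in> GG"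
  unfolding GG_def by blast

lemma compat_GG: "compat GG"
  unfolding compat_def
proof (intro allI impI)
  fix g l g' l' assume A: "(g,l) \<in> GG" and B: "(g',l') \<in> GG"
  show "cstar l * g' = cstar g * l' \<and> cstar l * l' = cstar g * l'"
    using A
  proof (cases rule: GG_cases)
    case (P a f)
    note X = this
    from B show ?thesis
    proof (cases rule: GG_cases)
      case (P b h) then show ?thesis using X C_PP[OF X(1) P(1), of a b] by simp
    next
      case (T \<nu> h) then show ?thesis using X C_PT[OF X(1) T(1), of a \<nu>] by simp
    next
      case (Ts \<nu> h) then show ?thesis using X C_PTs[OF X(1) Ts(1), of a \<nu>] by simp
    qed
  next
    case (T \<xi> f)
    note X = this
    from B show ?thesis
    proof (cases rule: GG_cases)
      case (P b h) then show ?thesis using X C_TP[OF X(1) P(1), of \<xi> b] by simp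
    next
      case (T \<nu> h) then show ?thesis using X C_TT[OF X(1) T(1), of \<xi> \<nu>] by simp
    next
      case (Ts \<nu> h) then show ?thesis using X C_TTs[OF X(1) Ts(1), of \<xi> \<nu>] by simp
    qed
  next
    case (Ts \<xi> f)
    note X = this
    from B show ?thesis
    proof (cases rule: GG_cases)
      case (P b h) then show ?thesis using X C_TsP[OF X(1) P(1), of \<xi> b] by simp
    next
      case (T \<nu> h) then show ?thesis using X C_TsT[OF X(1) T(1), of \<xi> \<nu>] by simp
    next
      case (Ts \<nu> h) then show ?thesis using X C_TsTs[OF X(1) Ts(1), of \<xi> \<nu>] by simp
    qed
  qed
qed

lemma st_GG: "\<forall>p\<in>GG. \<exists>l. (cstar (fst p), l) \<in> GG"
proof
  fix p assume "p \<in> GG"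
  then have "(fst p, snd p) \<in> GG" by simp
  then show "\<exists>l. (cstar (fst p), l) \<in> GG"
  proof (cases rule: GG_cases)
    case (P a f)
    then show ?thesis using GG_P[OF tail_star[OF P(1)], of "cstar a"] by (auto simp: Pstar)
  next
    case (T \<xi> f)
    then show ?thesis using GG_Ts[OF T(1), of \<xi>] by auto
  next
    case (Ts \<xi> f)
    then show ?thesis using GG_T[OF Ts(1), of \<xi>] by (auto simp: cstar_cstar)
  qed
qed

lemma id_GG: "\<forall>p\<in>GG. (snd p, snd p) \<in> GG"
proof
  fix p assume "p \<in> GG"
  then have "(fst p, snd p) \<in> GG" by simp
  then show "(snd p, snd p) \<in> GG"
  proof (cases rule: GG_cases)
    case (P a f)
    then show ?thesis using GG_P[OF tail_z, of a] by simp
  next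
    case (T \<xi> f)
    then show ?thesis using GG_T[OF tail_ef[OF T(1)], of \<xi>] by simp
  next
    case (Ts \<xi> f)
    then show ?thesis using GG_Ts[OF tail_z, of \<xi>] by simp
  qed
qed

lemma ne_GG: "GG \<noteq> {}"
  using GG_P[OF tail_z] by blast

lemma gen_GG: "cstar_gen (fst ` GG) = Cstar_rep phi rpi t"
proof -
  let ?gens = "rpi ` (UNIV \<times> Tl) \<union> t ` (UNIV \<times> Tl)"
  have "cstar_subalg S \<and> fst ` GG \<subseteq> S \<longleftrightarrow> cstar_subalg S \<and> ?gens \<subseteq> S" for S
  proof
    assume a: "cstar_subalg S \<and> fst ` GG \<subseteq> S"
    have "?gens \<subseteq> fst ` GG"
    proof
      fix x assume "x \<in> ?gens"
      then consider (r) a f where "f \<in> Tl" "x = rpi (a,f)" | (tt) \<xi> f where "f \<in> Tl" "x = t (\<xi>,f)"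
        by auto
      then show "x \<in> fst ` GG"
      proof cases
        case r then show ?thesis using GG_P[OF r(1), of a] by force
      next
        case tt then show ?thesis using GG_T[OF tt(1), of \<xi>] by force
      qed
    qed
    then show "cstar_subalg S \<and> ?gens \<subseteq> S" using a by blast
  next
    assume a: "cstar_subalg S \<and> ?gens \<subseteq> S"
    have "fst ` GG \<subseteq> S"
    proof
      fix x assume "x \<in> fst ` GG"
      then obtain l where "(x,l) \<in> GG" by force
      then show "x \<in> S"
      proof (cases rule: GG_cases)
        case (P a f) then show ?thesis using a by auto
      next
        case (T \<xi> f) then show ?thesis using a by auto
      next
        case (Ts \<xi> f)
        then have "t (\<xi>,f) \<in> S" using a by auto
        then show ?thesis using a Ts unfolding cstar_subalg_def by blast
      qed
    qed
    then show "cstar_subalg S \<and> fst ` GG \<subseteq> S" using a by blast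
  qed
  then show ?thesis unfolding cstar_gen_def Cstar_rep_def by presburger
qed

end


theorem mainTheorem10:
  fixes ip :: "'x::cbanach \<Rightarrow> 'x \<Rightarrow> 'a::cstar_alg"
    and rmul :: "'x \<Rightarrow> 'a \<Rightarrow> 'x"
    and phi :: "'a \<Rightarrow> 'x \<Rightarrow> 'x"
    and rpi :: "'a \<times> (nat \<Rightarrow> 'a) \<Rightarrow> 'c::cstar_alg"
    and t :: "'x \<times> (nat \<Rightarrow> 'a) \<Rightarrow> 'c"
  assumes "cstar_correspondence ip rmul phi"
    and "is_rep ip rmul phi rpi t"
  shows "\<exists>L R. multiplier_projection (Cstar_rep phi rpi t) L R \<and>
    (\<forall>a \<xi> f. f \<in> tail phi \<longrightarrow>
       L (t (\<xi>, f)) = t (\<xi>, \<lambda>n. if n = 0 then f 0 else 0) \<and>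
       R (t (\<xi>, f)) = t (\<xi>, \<lambda>n. 0) \<and>
       L (rpi (a, f)) = rpi (a, \<lambda>n. 0) \<and>
       R (rpi (a, f)) = rpi (a, \<lambda>n. 0))"
proof -
  interpret tr: tailrep ip rmul phi rpi t using assms by unfold_locales
  obtain L where L1: "\<forall>x\<in>cstar_gen (fst ` tr.GG). L x \<in> cstar_gen (fst ` tr.GG) \<and> L (L x) = L x \<and> cstar x \<in> cstar_gen (fst ` tr.GG)"
    and L2: "\<forall>x\<in>cstar_gen (fst ` tr.GG). \<forall>y\<in>cstar_gen (fst ` tr.GG). x * L y = cstar (L (cstar x)) * y"
    and L3: "\<forall>p\<in>tr.GG. L (fst p) = snd p"
    using abstract_mult[OF tr.compat_GG tr.st_GG tr.id_GG tr.ne_GG] by blast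
  define D where "D = Cstar_rep phi rpi t"
  have L1': "\<And>x. x \<in> D \<Longrightarrow> L x \<in> D \<and> L (L x) = L x \<and> cstar x \<in> D"
    using L1 unfolding D_def tr.gen_GG by blast
  have L2': "\<And>x y. x \<in> D \<Longrightarrow> y \<in> D \<Longrightarrow> x * L y = cstar (L (cstar x)) * y"
    using L2 unfolding D_def tr.gen_GG by blast
  have L3': "\<And>g l. (g,l) \<in> tr.GG \<Longrightarrow> L g = l"
    using L3 by force
  define R where "R x = cstar (L (cstar x))" for x
  have mp: "multiplier_projection D L R"
    unfolding multiplier_projection_def double_centralizer_def
  proof (intro conjI ballI)
    show "L ` D \<subseteq> D" using L1' by blast
    show "R ` D \<subseteq> D" unfolding R_def using L1' by blast
    fix x assume x: "x \<in> D"
    show "L x = cstar (R (cstar x))" unfolding R_def by (simp add: cstar_cstar)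
    show "R x = cstar (L (cstar x))" unfolding R_def ..
    show "L (L x) = L x" using L1' x by blast
    have cx: "cstar x \<in> D" using L1' x by blast
    have "L (L (cstar x)) = L (cstar x)" using L1' cx by blast
    then show "R (R x) = R x" unfolding R_def by (simp add: cstar_cstar)
  next
    fix x y assume "x \<in> D" "y \<in> D"
    then show "x * L y = R x * y" unfolding R_def by (rule L2')
  qed
  have vals: "L (t (\<xi>, f)) = t (\<xi>, \<lambda>n. if n = 0 then f 0 else 0) \<and>
       R (t (\<xi>, f)) = t (\<xi>, \<lambda>n. 0) \<and>
       L (rpi (a, f)) = rpi (a, \<lambda>n. 0) \<and>
       R (rpi (a, f)) = rpi (a, \<lambda>n. 0)" if f: "f \<in> tail phi" for a \<xi> f
  proof (intro conjI)
    show "L (t (\<xi>, f)) = t (\<xi>, \<lambda>n. if n = 0 then f 0 else 0)"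
      using L3'[OF tr.GG_T[OF f]] unfolding tr.ef_def .
    show "R (t (\<xi>, f)) = t (\<xi>, \<lambda>n. 0)"
      unfolding R_def using L3'[OF tr.GG_Ts[OF f]] by (simp add: cstar_cstar)
    show "L (rpi (a, f)) = rpi (a, \<lambda>n. 0)"
      using L3'[OF tr.GG_P[OF f]] .
    have "L (rpi (cstar a, \<lambda>n. cstar (f n))) = rpi (cstar a, \<lambda>n. 0)"
      using L3'[OF tr.GG_P[OF tr.tail_star[OF f]]] .
    then show "R (rpi (a, f)) = rpi (a, \<lambda>n. 0)"
      unfolding R_def using tr.Pstar[OF f] tr.Pstar[OF tr.tail_z, of "cstar a"]
      by (simp add: cstar_cstar)
  qed
  show ?thesis
    by (rule exI[of _ L], rule exI[of _ R]) (use mp vals in \<open>simp add: D_def\<close>)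
qed

end
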